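(* Let $N \in \mathbb{R}^{n \times r}$, $V \in \mathbb{R}^{r \times n}$, and for $\kappa\in\mathbb{R}^r_+$ let $f_\kappa\colon\mathbb{R}^n_+\to\mathbb{R}^n$, $f_\kappa(x) = N_\kappa x^V$. Let $S = \mathrm{im}(N)$ and $s = \mathrm{rank}(N)$. The following are equivalent: (inj) for all $\kappa\in\mathbb{R}^r_+$ and all $x'\in\mathbb{R}^n_+$, $f_\kappa$ is injective on $(x'+S)\cap\mathbb{R}^n_+$; (jac) for all $\kappa \in \mathbb{R}^r_+$ and $x \in \mathbb{R}^n_+$, the Jacobian matrix $J_{f_\kappa}(x)$ is injective on $S$; (min) for all $I\subseteq [n]$, $J\subseteq [r]$ of cardinality $s$, the product $\det(N_{I,J}) \det(V_{J,I})$ either is zero or has the same sign as all other nonzero such products, and at least one such product is nonzero; (sig) $\sigma(\ker(N)) \cap \sigma(V(\Sigma(S^* ))) = \emptyset$.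
   Context: $\mathbb{R}_+$ denotes the strictly positive reals. $(x^V)_j=\prod_i x_i^{v_{ji}}$ (real exponents), $N_\kappa=N\,\mathrm{diag}(\kappa)$, $[n]=\{1,\dots,n\}$, $M_{K,L}$ is the submatrix with rows in $K$ and columns in $L$. $\sigma$ is the componentwise sign vector; for $T\subseteq\mathbb{R}^k$, $\sigma(T)=\{\sigma(x)\mid x\in T\}$ and $\Sigma(T)=\sigma^{-1}(\sigma(T))$; $S^*=S\setminus\{0\}$; $V(T)=\{Vx\mid x\in T\}$. *)

theory Defs
  imports "HOL-Analysis.Analysis" "HOL-Combinatorics.Permutations"
begin

text \<open>Strictly positive orthant.\<close>
definition pos_orthant :: "(real^'n) set" where
  "pos_orthant = {x. \<forall>i. x $ i > 0}"

text \<open>Generalized monomials: (x^V)_j = prod_i x_i powr v_ji, V an r x n matrix.\<close>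
definition monom_vec :: "real^'n^'r \<Rightarrow> real^'n \<Rightarrow> real^'r" where
  "monom_vec V x = (\<chi> j. \<Prod>i\<in>UNIV. (x $ i) powr (V $ j $ i))"

text \<open>f_kappa(x) = N diag(kappa) x^V.\<close>
definition f_kappa :: "real^'r^'n \<Rightarrow> real^'n^'r \<Rightarrow> real^'r \<Rightarrow> real^'n \<Rightarrow> real^'n" where
  "f_kappa N V \<kappa> x = N *v (\<chi> j. \<kappa> $ j * monom_vec V x $ j)"

text \<open>Componentwise sign vector and the sets sigma(T), Sigma(T).\<close>
definition sign_vec :: "real^'n \<Rightarrow> real^'n" where
  "sign_vec x = (\<chi> i. sgn (x $ i))"

definition Sigma_set :: "(real^'n) set \<Rightarrow> (real^'n) set" where
  "Sigma_set T = {y. sign_vec y \<in> sign_vec ` T}"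

text \<open>A fixed enumeration of a finite set by 0..<card A (the product of minors
  used below does not depend on this choice, since the same enumeration is
  used for rows and columns).\<close>
definition enum_set :: "'a set \<Rightarrow> nat \<Rightarrow> 'a" where
  "enum_set A = (SOME e. bij_betw e {..<card A} A)"

text \<open>Determinant (Leibniz formula) of the submatrix A_{I,J}, with |I| = |J|.\<close>
definition submat_det :: "real^'c^'r \<Rightarrow> 'r set \<Rightarrow> 'c set \<Rightarrow> real" where
  "submat_det A I J =
     (\<Sum>p | p permutes {..<card I}.
        of_int (sign p) * (\<Prod>i<card I. A $ enum_set I i $ enum_set J (p i)))"

end

theory Submission
  imports Defs "Jordan_Normal_Form.Determinant"
begin

(* ---- CB ---- *)


no_notation vec_index (infixl "$" 100)

definition detL :: "nat \<Rightarrow> (nat \<Rightarrow> nat \<Rightarrow> real) \<Rightarrow> real" where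
  "detL n M = (\<Sum>p | p permutes {..<n}. of_int (sign p) * (\<Prod>i<n. M i (p i)))"

lemma detL_det: "detL n M = det (mat n n (\<lambda>(i,j). M i j))"
proof -
  have "det (mat n n (\<lambda>(i,j). M i j)) = (\<Sum> p \<in> {p. p permutes {0 ..< n}}.
     signof p * (\<Prod> i = 0 ..< n. mat n n (\<lambda>(i,j). M i j) $$ (i, p i)))"
    by (rule det_def') auto
  also have "\<dots> = detL n M" unfolding detL_def atLeast0LessThan
  proof (rule sum.cong[OF refl])
    fix p assume "p \<in> {p. p permutes {..<n}}"
    hence p: "p permutes {..<n}" by simp
    have "(\<Prod>i<n. mat n n (\<lambda>(i,j). M i j) $$ (i, p i)) = (\<Prod>i<n. M i (p i))"
      by (rule prod.cong) (use permutes_in_image[OF p] in auto)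
    then show "signof p * (\<Prod>i<n. mat n n (\<lambda>(i,j). M i j) $$ (i, p i)) = of_int (sign p) * (\<Prod>i<n. M i (p i))"
      by simp
  qed
  finally show ?thesis by simp
qed

lemma detL_cong: "(\<And>i j. i < n \<Longrightarrow> j < n \<Longrightarrow> M i j = M' i j) \<Longrightarrow> detL n M = detL n M'"
  unfolding detL_def
proof (intro sum.cong refl arg_cong2[where f="(*)"] prod.cong)
  fix p i assume "p \<in> {p. p permutes {..<n}}" "i \<in> {..<n}"
  moreover assume "\<And>i j. i < n \<Longrightarrow> j < n \<Longrightarrow> M i j = M' i j"
  ultimately show "M i (p i) = M' i (p i)" using permutes_in_image[of p "{..<n}" i] by auto
qed

lemma detL_identical_rows:
  assumes "i < n" "j < n" "i \<noteq> j" "\<And>k. M i k = M j k"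
  shows "detL n M = 0"
  unfolding detL_det
  by (rule det_identical_rows[of _ n i j]) (use assms in \<open>auto simp: row_def\<close>)

lemma detL_permute_rows:
  assumes p: "p permutes {..<n}"
  shows "detL n (\<lambda>i j. M (p i) j) = of_int (sign p) * detL n M"
proof -
  have p': "p permutes {0..<n}" using p by (simp add: atLeast0LessThan)
  have "detL n (\<lambda>i j. M (p i) j) = det (mat n n (\<lambda>(i,j). mat n n (\<lambda>(i,j). M i j) $$ (p i, j)))"
    unfolding detL_det
  proof (intro arg_cong[where f=det] eq_matI)
    fix i j assume "i < dim_row (mat n n (\<lambda>(i,j). mat n n (\<lambda>(i,j). M i j) $$ (p i, j)))"
      "j < dim_col (mat n n (\<lambda>(i,j). mat n n (\<lambda>(i,j). M i j) $$ (p i, j)))"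
    then have ij: "i < n" "j < n" by auto
    then have "p i < n" using permutes_in_image[OF p, of i] by auto
    with ij show "mat n n (\<lambda>(i,j). M (p i) j) $$ (i, j) = mat n n (\<lambda>(i,j). mat n n (\<lambda>(i,j). M i j) $$ (p i, j)) $$ (i, j)"
      by simp
  qed auto
  also have "\<dots> = signof p * det (mat n n (\<lambda>(i,j). M i j))"
    by (rule det_permute_rows[OF _ p']) auto
  finally show ?thesis by (simp add: detL_det)
qed

lemma detL_mult:
  "detL n (\<lambda>i j. \<Sum>k<n. A i k * B k j) = detL n A * detL n B"
proof -
  have "mat n n (\<lambda>(i,j). \<Sum>k<n. A i k * B k j) = mat n n (\<lambda>(i,j). A i j) * mat n n (\<lambda>(i,j). B i j)"
    by (rule eq_matI) (auto simp: scalar_prod_def atLeast0LessThan intro!: sum.cong)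
  then show ?thesis unfolding detL_det by (simp add: det_mult[of _ n])
qed

lemma detL_scale_cols:
  "detL n (\<lambda>i j. M i j * c j) = (\<Prod>j<n. c j) * detL n M"
  unfolding detL_def sum_distrib_left
proof (rule sum.cong[OF refl])
  fix p assume "p \<in> {p. p permutes {..<n}}"
  hence p: "p permutes {..<n}" by simp
  have "(\<Prod>i<n. c (p i)) = (\<Prod>j<n. c j)"
    using prod.permute[OF p, of c] by (simp add: o_def)
  then show "of_int (sign p) * (\<Prod>i<n. M i (p i) * c (p i)) = (\<Prod>j<n. c j) * (of_int (sign p) * (\<Prod>i<n. M i (p i)))"
    by (simp add: prod.distrib)
qed

lemma enum_set_bij: "finite A \<Longrightarrow> bij_betw (enum_set A) {..<card A} A"
  unfolding enum_set_def
proof -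
  assume "finite A"
  then obtain h where "bij_betw h {..<card A} A" using ex_bij_betw_nat_finite[of A] by (auto simp: atLeast0LessThan)
  then show "bij_betw (SOME e. bij_betw e {..<card A} A) {..<card A} A" by (rule someI[where x=h])
qed

lemma submat_det_detL: "submat_det A I J = detL (card I) (\<lambda>i j. A $ enum_set I i $ enum_set J j)"
  unfolding submat_det_def detL_def by simp


(* ---- CB2 ---- *)


lemma cauchy_binet:
  fixes A :: "nat \<Rightarrow> 'k \<Rightarrow> real" and B :: "'k \<Rightarrow> nat \<Rightarrow> real"
  assumes K: "finite K"
  shows "detL s (\<lambda>i j. \<Sum>k\<in>K. A i k * B k j) =
    (\<Sum>J | J \<subseteq> K \<and> card J = s. detL s (\<lambda>i j. A i (enum_set J j)) * detL s (\<lambda>i j. B (enum_set J i) j))"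
proof -
  let ?F = "PiE {..<s} (\<lambda>_. K)"
  let ?P = "{p. p permutes {..<s}}"
  let ?g = "\<lambda>f. (\<Prod>i<s. A i (f i)) * detL s (\<lambda>i j. B (f i) j)"
  have finF: "finite ?F" using K by (simp add: finite_PiE)
  have step1: "detL s (\<lambda>i j. \<Sum>k\<in>K. A i k * B k j) = (\<Sum>f\<in>?F. ?g f)"
  proof -
    have "detL s (\<lambda>i j. \<Sum>k\<in>K. A i k * B k j) =
      (\<Sum>p\<in>?P. of_int (sign p) * (\<Sum>f\<in>?F. \<Prod>i<s. A i (f i) * B (f i) (p i)))"
      unfolding detL_def by (simp add: prod_sum_PiE K)
    also have "\<dots> = (\<Sum>p\<in>?P. \<Sum>f\<in>?F. (\<Prod>i<s. A i (f i)) * (of_int (sign p) * (\<Prod>i<s. B (f i) (p i))))"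
      by (simp add: sum_distrib_left prod.distrib mult_ac)
    also have "\<dots> = (\<Sum>f\<in>?F. \<Sum>p\<in>?P. (\<Prod>i<s. A i (f i)) * (of_int (sign p) * (\<Prod>i<s. B (f i) (p i))))"
      by (rule sum.swap)
    also have "\<dots> = (\<Sum>f\<in>?F. ?g f)"
      unfolding detL_def by (simp add: sum_distrib_left)
    finally show ?thesis .
  qed
  let ?Fi = "{f\<in>?F. inj_on f {..<s}}"
  let ?Fn = "{f\<in>?F. \<not> inj_on f {..<s}}"
  have split: "(\<Sum>f\<in>?F. ?g f) = (\<Sum>f\<in>?Fi. ?g f) + (\<Sum>f\<in>?Fn. ?g f)"
  proof -
    have "?F = ?Fi \<union> ?Fn" by auto
    then have "(\<Sum>f\<in>?F. ?g f) = (\<Sum>f\<in>?Fi \<union> ?Fn. ?g f)" by simp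
    also have "\<dots> = (\<Sum>f\<in>?Fi. ?g f) + (\<Sum>f\<in>?Fn. ?g f)"
      by (rule sum.union_disjoint) (use finF in auto)
    finally show ?thesis .
  qed
  have zero: "(\<Sum>f\<in>?Fn. ?g f) = 0"
  proof (rule sum.neutral, rule ballI)
    fix f assume "f \<in> ?Fn"
    then obtain i j where ij: "i < s" "j < s" "i \<noteq> j" "f i = f j" unfolding inj_on_def by auto
    have "detL s (\<lambda>i j. B (f i) j) = 0"
      by (rule detL_identical_rows[OF ij(1,2,3)]) (simp add: ij(4))
    then show "?g f = 0" by simp
  qed
  let ?D = "Sigma {J. J \<subseteq> K \<and> card J = s} (\<lambda>_. ?P)"
  define \<phi> where "\<phi> = (\<lambda>(J::'k set,\<tau>). restrict (enum_set J \<circ> \<tau>) {..<s})"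
  have eJ: "bij_betw (enum_set J) {..<s} J" if "J \<subseteq> K" "card J = s" for J
    using enum_set_bij[of J] that finite_subset[OF _ K] by auto
  have bij: "bij_betw \<phi> ?D ?Fi"
  proof (rule bij_betw_imageI)
    show "inj_on \<phi> ?D"
    proof (rule inj_onI)
      fix x y assume x: "x \<in> ?D" and y: "y \<in> ?D" and eq0: "\<phi> x = \<phi> y"
      obtain J \<tau> J' \<tau>' where xy: "x = (J,\<tau>)" "y = (J',\<tau>')" by (cases x, cases y) auto
      have J: "J \<subseteq> K" "card J = s" "\<tau> permutes {..<s}" and J': "J' \<subseteq> K" "card J' = s" "\<tau>' permutes {..<s}"
        using x y xy by auto
      have eq: "\<phi> (J, \<tau>) = \<phi> (J', \<tau>')" using eq0 xy by simp
      have img: "\<phi> (J,\<tau>) ` {..<s} = J" if "J \<subseteq> K" "card J = s" "\<tau> permutes {..<s}" for J \<tau>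
      proof -
        have "\<phi> (J,\<tau>) ` {..<s} = enum_set J ` (\<tau> ` {..<s})" unfolding \<phi>_def by (auto simp: image_iff)
        also have "\<tau> ` {..<s} = {..<s}" using permutes_image[OF that(3)] .
        finally show ?thesis using eJ[OF that(1,2)] by (simp add: bij_betw_def)
      qed
      have JJ: "J = J'" using img[OF J] img[OF J'] eq by simp
      have "\<tau> i = \<tau>' i" for i
      proof (cases "i < s")
        case True
        have "enum_set J (\<tau> i) = enum_set J (\<tau>' i)"
          using fun_cong[OF eq, of i] True JJ unfolding \<phi>_def by simp
        moreover have "\<tau> i \<in> {..<s}" "\<tau>' i \<in> {..<s}"
          using permutes_in_image[OF J(3)] permutes_in_image[OF J'(3)] True by auto
        ultimately show ?thesis using eJ[OF J(1,2)] unfolding bij_betw_def inj_on_def by blast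
      next
        case False
        then show ?thesis using permutes_not_in[OF J(3)] permutes_not_in[OF J'(3)] by auto
      qed
      then show "x = y" using JJ xy by auto
    qed
    show "\<phi> ` ?D = ?Fi"
    proof (intro equalityI subsetI)
      fix f assume "f \<in> \<phi> ` ?D"
      then obtain J \<tau> where J: "J \<subseteq> K" "card J = s" "\<tau> permutes {..<s}" and f: "f = \<phi> (J,\<tau>)" by auto
      have "enum_set J (\<tau> i) \<in> K" if "i < s" for i
        using J permutes_in_image[OF J(3), of i] that eJ[OF J(1,2)] unfolding bij_betw_def by auto
      moreover have "inj_on (enum_set J \<circ> \<tau>) {..<s}"
        by (rule comp_inj_on) (use J eJ[OF J(1,2)] permutes_inj_on[OF J(3)] permutes_image[OF J(3)] in \<open>auto simp: bij_betw_def\<close>)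
      ultimately show "f \<in> ?Fi" unfolding f \<phi>_def by (auto simp: inj_on_def)
    next
      fix f assume f: "f \<in> ?Fi"
      define J where "J = f ` {..<s}"
      have JK: "J \<subseteq> K" using f unfolding J_def by auto
      have cJ: "card J = s" using f unfolding J_def by (simp add: card_image)
      define \<tau> where "\<tau> = (\<lambda>i. if i < s then inv_into {..<s} (enum_set J) (f i) else i)"
      have bf: "bij_betw f {..<s} J" using f unfolding J_def by (auto simp: bij_betw_def)
      have bi: "bij_betw (inv_into {..<s} (enum_set J)) J {..<s}"
        by (rule bij_betw_inv_into[OF eJ[OF JK cJ]])
      have "bij_betw (inv_into {..<s} (enum_set J) \<circ> f) {..<s} {..<s}"
        by (rule bij_betw_trans[OF bf bi])
      then have "bij_betw \<tau> {..<s} {..<s}"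
        by (rule bij_betw_cong[THEN iffD1, rotated]) (auto simp: \<tau>_def)
      then have tp: "\<tau> permutes {..<s}"
        by (rule bij_imp_permutes) (auto simp: \<tau>_def)
      have phif: "\<phi> (J,\<tau>) = f"
      proof
        fix i show "\<phi> (J,\<tau>) i = f i"
        proof (cases "i < s")
          case True
          have "f i \<in> enum_set J ` {..<s}" using eJ[OF JK cJ] True unfolding J_def bij_betw_def by auto
          then show ?thesis using True unfolding \<phi>_def \<tau>_def by (simp add: f_inv_into_f)
        next
          case False
          have "f \<in> PiE {..<s} (\<lambda>_. K)" using f by simp
          then have fi: "f i = undefined" using False by (intro PiE_arb[of f "{..<s}" "\<lambda>_. K"]) auto
          have "\<phi> (J,\<tau>) i = undefined" using False unfolding \<phi>_def by simp
          then show ?thesis using fi by (simp only:)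
        qed
      qed
      have mem: "(J,\<tau>) \<in> ?D" using JK cJ tp by blast
      show "f \<in> \<phi> ` ?D" by (rule image_eqI[where f=\<phi> and x="(J,\<tau>)", OF phif[symmetric] mem])
    qed
  qed
  have "(\<Sum>f\<in>?Fi. ?g f) = (\<Sum>x\<in>?D. ?g (\<phi> x))"
    by (rule sum.reindex_bij_betw[OF bij, symmetric])
  also have "\<dots> = (\<Sum>(J,\<tau>)\<in>?D. ?g (\<phi> (J,\<tau>)))"
    by (rule sum.cong) auto
  also have "\<dots> = (\<Sum>J | J \<subseteq> K \<and> card J = s. \<Sum>\<tau>\<in>?P. ?g (\<phi> (J,\<tau>)))"
    by (rule sum.Sigma[symmetric]) (use K in \<open>auto intro: finite_subset[of _ "Pow K"] finite_permutations\<close>)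
  also have "\<dots> = (\<Sum>J | J \<subseteq> K \<and> card J = s. detL s (\<lambda>i j. A i (enum_set J j)) * detL s (\<lambda>i j. B (enum_set J i) j))"
  proof (rule sum.cong[OF refl])
    fix J assume "J \<in> {J. J \<subseteq> K \<and> card J = s}"
    have "?g (\<phi> (J,\<tau>)) = detL s (\<lambda>i j. B (enum_set J i) j) * (of_int (sign \<tau>) * (\<Prod>i<s. A i (enum_set J (\<tau> i))))"
      if t: "\<tau> \<in> ?P" for \<tau>
    proof -
      have t': "\<tau> permutes {..<s}" using t by simp
      have "(\<Prod>i<s. A i (\<phi> (J,\<tau>) i)) = (\<Prod>i<s. A i (enum_set J (\<tau> i)))"
        by (rule prod.cong) (auto simp: \<phi>_def)
      moreover have "detL s (\<lambda>i j. B (\<phi> (J,\<tau>) i) j) = detL s (\<lambda>i j. B (enum_set J (\<tau> i)) j)"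
        by (rule detL_cong) (auto simp: \<phi>_def)
      moreover have "detL s (\<lambda>i j. B (enum_set J (\<tau> i)) j) = of_int (sign \<tau>) * detL s (\<lambda>i j. B (enum_set J i) j)"
        using detL_permute_rows[OF t', of "\<lambda>i j. B (enum_set J i) j"] by simp
      ultimately show ?thesis by simp
    qed
    then have "(\<Sum>\<tau>\<in>?P. ?g (\<phi> (J,\<tau>))) = (\<Sum>\<tau>\<in>?P. detL s (\<lambda>i j. B (enum_set J i) j) * (of_int (sign \<tau>) * (\<Prod>i<s. A i (enum_set J (\<tau> i)))))"
      by (rule sum.cong[OF refl])
    also have "\<dots> = detL s (\<lambda>i j. B (enum_set J i) j) * detL s (\<lambda>i j. A i (enum_set J j))"
      unfolding detL_def sum_distrib_left by simp
    finally show "(\<Sum>\<tau>\<in>?P. ?g (\<phi> (J,\<tau>))) = detL s (\<lambda>i j. A i (enum_set J j)) * detL s (\<lambda>i j. B (enum_set J i) j)"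
      by simp
  qed
  finally show ?thesis using step1 split zero by simp
qed


(* ---- LA ---- *)


lemma subspace_range_mv: "subspace (range (\<lambda>y. (N::real^'r^'n) *v y))"
proof -
  have "subspace ((\<lambda>y. N *v y) ` UNIV)"
    by (rule linear_subspace_image[OF matrix_vector_mul_linear subspace_UNIV])
  then show ?thesis by simp
qed

lemma obtain_basis:
  fixes N :: "real^'r^'n"
  obtains b :: "nat \<Rightarrow> real^'n" and cc :: "nat \<Rightarrow> 'r \<Rightarrow> real" where
    "\<And>k. k < rank N \<Longrightarrow> b k \<in> range (\<lambda>y. N *v y)"
    "\<And>u. u \<in> range (\<lambda>y. N *v y) \<Longrightarrow> \<exists>w. u = (\<Sum>k<rank N. w k *\<^sub>R b k)"
    "\<And>w k. (\<Sum>k<rank N. w k *\<^sub>R b k) = 0 \<Longrightarrow> k < rank N \<Longrightarrow> w k = 0"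
    "\<And>i j. N $ i $ j = (\<Sum>k<rank N. b k $ i * cc k j)"
proof -
  let ?S = "range (\<lambda>y. N *v y)"
  let ?s = "rank N"
  obtain B where B: "B \<subseteq> ?S" "independent B" "?S \<subseteq> span B" "card B = dim ?S"
    by (rule basis_exists)
  have fB: "finite B" using B(2) by (simp add: independent_explicit)
  have cB: "card B = ?s" using B(4) by (simp add: rank_dim_range)
  define e where "e = enum_set B"
  have eb: "bij_betw e {..<?s} B" unfolding e_def using enum_set_bij[OF fB] cB by simp
  have e1: "e k \<in> ?S" if "k < ?s" for k
    using eb that B(1) unfolding bij_betw_def by auto
  have e2: "\<exists>w. u = (\<Sum>k<?s. w k *\<^sub>R e k)" if "u \<in> ?S" for u
  proof -
    have "u \<in> span B" using that B(3) by auto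
    then obtain c where c: "u = (\<Sum>v\<in>B. c v *\<^sub>R v)" using span_finite[OF fB] by auto
    also have "\<dots> = (\<Sum>k<?s. c (e k) *\<^sub>R e k)"
      by (rule sum.reindex_bij_betw[OF eb, symmetric])
    finally have "u = (\<Sum>k<?s. (\<lambda>k. c (e k)) k *\<^sub>R e k)" .
    then show ?thesis by (rule exI[where x="\<lambda>k. c (e k)"])
  qed
  have e3: "w k = 0" if w: "(\<Sum>k<?s. w k *\<^sub>R e k) = 0" and k: "k < ?s" for w k
  proof -
    define c where "c = (\<lambda>v. w (inv_into {..<?s} e v))"
    have "(\<Sum>v\<in>B. c v *\<^sub>R v) = (\<Sum>k<?s. c (e k) *\<^sub>R e k)"
      by (rule sum.reindex_bij_betw[OF eb, symmetric])
    also have "\<dots> = (\<Sum>k<?s. w k *\<^sub>R e k)"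
      by (rule sum.cong[OF refl]) (use eb in \<open>auto simp: c_def bij_betw_def inv_into_f_f\<close>)
    finally have "(\<Sum>v\<in>B. c v *\<^sub>R v) = 0" using w by simp
    then have "c (e k) = 0" using B(2) eb k unfolding independent_explicit bij_betw_def by auto
    then show ?thesis using eb k by (auto simp: c_def bij_betw_def inv_into_f_f)
  qed
  define cc where "cc = (\<lambda>k j. (SOME w. column j N = (\<Sum>k<?s. w k *\<^sub>R e k)) k)"
  have e4: "N $ i $ j = (\<Sum>k<?s. e k $ i * cc k j)" for i j
  proof -
    have "column j N \<in> ?S" by (metis matrix_vector_mult_basis rangeI)
    then have "\<exists>w. column j N = (\<Sum>k<?s. w k *\<^sub>R e k)" by (rule e2)
    then have "column j N = (\<Sum>k<?s. (\<lambda>k. cc k j) k *\<^sub>R e k)"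
      unfolding cc_def by (rule someI_ex)
    then have "column j N $ i = (\<Sum>k<?s. cc k j * e k $ i)"
      by (simp add: sum_component)
    then show ?thesis by (simp add: column_def mult.commute)
  qed
  show ?thesis using that[of e cc] e1 e2 e3 e4 by blast
qed


(* ---- LA2 ---- *)


lemma detL_nonzero_iff:
  "detL n M \<noteq> 0 \<longleftrightarrow> (\<forall>w. (\<forall>k<n. (\<Sum>l<n. M k l * w l) = 0) \<longrightarrow> (\<forall>l<n. w l = 0))"
proof -
  define A where "A = mat n n (\<lambda>(i,j). M i j)"
  have A: "A \<in> carrier_mat n n" unfolding A_def by simp
  have mv: "vec_index (A *\<^sub>v v) k = (\<Sum>l<n. M k l * vec_index v l)" if "v \<in> carrier_vec n" "k < n" for v k
    using that unfolding A_def
    by (auto simp: scalar_prod_def atLeast0LessThan intro!: sum.cong)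
  have "detL n M = 0 \<longleftrightarrow> (\<exists>v. v \<in> carrier_vec n \<and> v \<noteq> 0\<^sub>v n \<and> A *\<^sub>v v = 0\<^sub>v n)"
    unfolding detL_det A_def[symmetric] by (rule det_0_iff_vec_prod_zero_field[OF A])
  also have "\<dots> \<longleftrightarrow> (\<exists>w. (\<forall>k<n. (\<Sum>l<n. M k l * w l) = 0) \<and> (\<exists>l<n. w l \<noteq> 0))"
  proof
    assume "\<exists>v. v \<in> carrier_vec n \<and> v \<noteq> 0\<^sub>v n \<and> A *\<^sub>v v = 0\<^sub>v n"
    then obtain v where v: "v \<in> carrier_vec n" "v \<noteq> 0\<^sub>v n" "A *\<^sub>v v = 0\<^sub>v n" by blast
    have "\<forall>k<n. (\<Sum>l<n. M k l * vec_index v l) = 0"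
    proof (intro allI impI)
      fix k assume k: "k < n"
      have "vec_index (A *\<^sub>v v) k = 0" using v(3) k by simp
      then show "(\<Sum>l<n. M k l * vec_index v l) = 0" using mv[OF v(1) k] by simp
    qed
    moreover have "\<exists>l<n. vec_index v l \<noteq> 0"
    proof (rule ccontr)
      assume "\<not> ?thesis"
      then have "v = 0\<^sub>v n" using v(1) by (intro eq_vecI) auto
      then show False using v(2) by simp
    qed
    ultimately show "\<exists>w. (\<forall>k<n. (\<Sum>l<n. M k l * w l) = 0) \<and> (\<exists>l<n. w l \<noteq> 0)" by blast
  next
    assume "\<exists>w. (\<forall>k<n. (\<Sum>l<n. M k l * w l) = 0) \<and> (\<exists>l<n. w l \<noteq> 0)"
    then obtain w l where w: "\<forall>k<n. (\<Sum>l<n. M k l * w l) = 0" "l < n" "w l \<noteq> 0" by blast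
    define v where "v = vec n w"
    have vc: "v \<in> carrier_vec n" unfolding v_def by simp
    have "v \<noteq> 0\<^sub>v n"
    proof
      assume "v = 0\<^sub>v n"
      then have "vec_index v l = 0" using w(2) by simp
      then show False using w(2,3) unfolding v_def by simp
    qed
    moreover have "A *\<^sub>v v = 0\<^sub>v n"
    proof (rule eq_vecI)
      fix k assume "k < dim_vec (0\<^sub>v n)"
      then have k: "k < n" by simp
      have "vec_index (A *\<^sub>v v) k = (\<Sum>l<n. M k l * w l)"
      proof -
        have "(\<Sum>l<n. M k l * vec_index v l) = (\<Sum>l<n. M k l * w l)"
          unfolding v_def by (intro sum.cong) auto
        then show ?thesis using mv[OF vc k] by simp
      qed
      then show "vec_index (A *\<^sub>v v) k = vec_index (0\<^sub>v n) k" using w(1) k by simp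
    qed (use A in simp)
    ultimately show "\<exists>v. v \<in> carrier_vec n \<and> v \<noteq> 0\<^sub>v n \<and> A *\<^sub>v v = 0\<^sub>v n" using vc by blast
  qed
  finally show ?thesis by blast
qed


(* ---- LA3 ---- *)


definition hadm :: "real^'a \<Rightarrow> real^'a \<Rightarrow> real^'a" where "hadm x y = (\<chi> i. x$i * y$i)"

lemma D1:
  fixes N :: "real^'r^'n" and V :: "real^'n^'r" and b :: "nat \<Rightarrow> real^'n"
  assumes Nb: "\<And>i j. N $ i $ j = (\<Sum>k<s. b k $ i * cc k j)"
  shows "N *v hadm c (V *v hadm e (\<Sum>l<s. w l *\<^sub>R b l)) =
    (\<Sum>k<s. (\<Sum>l<s. (\<Sum>j\<in>UNIV. (cc k j * c$j) * (\<Sum>i\<in>UNIV. V$j$i * e$i * b l $ i)) * w l) *\<^sub>R b k)"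
proof (rule Finite_Cartesian_Product.vec_eq_iff[THEN iffD2, rule_format])
  fix i
  define Y where "Y = (\<lambda>j. \<Sum>l<s. w l * (\<Sum>m\<in>UNIV. V$j$m * e$m * b l $ m))"
  have Y1: "(\<Sum>m\<in>UNIV. V$j$m * (e$m * (\<Sum>l<s. w l * b l$m))) = Y j" for j
  proof -
    have "(\<Sum>m\<in>UNIV. V$j$m * (e$m * (\<Sum>l<s. w l * b l$m))) = (\<Sum>m\<in>UNIV. \<Sum>l<s. w l * (V$j$m * e$m * b l $ m))"
      by (simp add: sum_distrib_left mult_ac)
    also have "\<dots> = (\<Sum>l<s. \<Sum>m\<in>UNIV. w l * (V$j$m * e$m * b l $ m))" by (rule sum.swap)
    also have "\<dots> = Y j" unfolding Y_def by (simp add: sum_distrib_left)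
    finally show ?thesis .
  qed
  have "(N *v hadm c (V *v hadm e (\<Sum>l<s. w l *\<^sub>R b l))) $ i
      = (\<Sum>j\<in>UNIV. N$i$j * (c$j * (\<Sum>m\<in>UNIV. V$j$m * (e$m * (\<Sum>l<s. w l * b l$m)))))"
    by (simp add: matrix_vector_mult_def hadm_def sum_component)
  also have "\<dots> = (\<Sum>j\<in>UNIV. (\<Sum>k<s. b k $ i * cc k j) * (c$j * Y j))"
    by (simp add: Y1 Nb)
  also have "\<dots> = (\<Sum>j\<in>UNIV. \<Sum>k<s. b k $ i * (cc k j * c$j * Y j))"
    by (simp add: sum_distrib_right sum_distrib_left mult_ac)
  also have "\<dots> = (\<Sum>k<s. \<Sum>j\<in>UNIV. b k $ i * (cc k j * c$j * Y j))" by (rule sum.swap)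
  also have "\<dots> = (\<Sum>k<s. (\<Sum>l<s. (\<Sum>j\<in>UNIV. (cc k j * c$j) * (\<Sum>i\<in>UNIV. V$j$i * e$i * b l $ i)) * w l) * b k $ i)"
  proof (rule sum.cong[OF refl])
    fix k
    have "(\<Sum>l<s. (\<Sum>j\<in>UNIV. (cc k j * c$j) * (\<Sum>i\<in>UNIV. V$j$i * e$i * b l $ i)) * w l)
        = (\<Sum>l<s. \<Sum>j\<in>UNIV. (cc k j * c$j) * (w l * (\<Sum>i\<in>UNIV. V$j$i * e$i * b l $ i)))"
      by (rule sum.cong[OF refl]) (simp add: sum_distrib_right sum_distrib_left mult_ac)
    also have "\<dots> = (\<Sum>j\<in>UNIV. \<Sum>l<s. (cc k j * c$j) * (w l * (\<Sum>i\<in>UNIV. V$j$i * e$i * b l $ i)))"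
      by (rule sum.swap)
    also have "\<dots> = (\<Sum>j\<in>UNIV. cc k j * c$j * Y j)"
      unfolding Y_def by (simp add: sum_distrib_left)
    finally show "(\<Sum>j\<in>UNIV. b k $ i * (cc k j * c$j * Y j)) =
      (\<Sum>l<s. (\<Sum>j\<in>UNIV. (cc k j * c$j) * (\<Sum>i\<in>UNIV. V$j$i * e$i * b l $ i)) * w l) * b k $ i"
      by (simp add: sum_distrib_left sum_distrib_right mult_ac)
  qed
  also have "\<dots> = (\<Sum>k<s. (\<Sum>l<s. (\<Sum>j\<in>UNIV. (cc k j * c$j) * (\<Sum>i\<in>UNIV. V$j$i * e$i * b l $ i)) * w l) *\<^sub>R b k) $ i"
    by (simp add: sum_component)
  finally show "(N *v hadm c (V *v hadm e (\<Sum>l<s. w l *\<^sub>R b l))) $ i =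
    (\<Sum>k<s. (\<Sum>l<s. (\<Sum>j\<in>UNIV. (cc k j * c$j) * (\<Sum>i\<in>UNIV. V$j$i * e$i * b l $ i)) * w l) *\<^sub>R b k) $ i" .
qed


(* ---- DV ---- *)


lemma has_derivative_vec_lambda':
  fixes g :: "'j::finite \<Rightarrow> 'a::real_normed_vector \<Rightarrow> real"
  assumes "\<And>j. (g j has_derivative g' j) F"
  shows "((\<lambda>x. (\<chi> j. g j x) :: real^'j) has_derivative (\<lambda>h. \<chi> j. g' j h)) F"
proof -
  have eq: "(\<chi> j. f j) = (\<Sum>j\<in>UNIV. f j *\<^sub>R axis j (1::real))" for f :: "'j \<Rightarrow> real"
    by (simp add: Finite_Cartesian_Product.vec_eq_iff sum_component axis_def if_distrib[of "\<lambda>x. _ * x"] sum.delta cong: if_cong)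
  have "((\<lambda>x. \<Sum>j\<in>UNIV. g j x *\<^sub>R axis j (1::real)) has_derivative (\<lambda>h. \<Sum>j\<in>UNIV. g' j h *\<^sub>R axis j (1::real))) F"
    by (intro has_derivative_sum has_derivative_scaleR_left assms)
  then show ?thesis by (simp only: eq)
qed

lemma monom_pos: "x \<in> pos_orthant \<Longrightarrow> monom_vec V x $ j > 0"
  unfolding monom_vec_def pos_orthant_def by (auto intro!: prod_pos simp: less_imp_neq[symmetric])

lemma monom_deriv:
  fixes V :: "real^'n^'r"
  assumes x: "x \<in> pos_orthant"
  shows "((\<lambda>x. monom_vec V x $ j) has_derivative
     (\<lambda>h. monom_vec V x $ j * (\<Sum>i\<in>UNIV. V$j$i * (h$i / x$i)))) (at x)"
proof -
  have xi: "x$i > 0" for i using x unfolding pos_orthant_def by auto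
  have nth: "((\<lambda>x::real^'n. x $ i) has_derivative (\<lambda>h. h $ i)) (at x)" for i
    by (rule bounded_linear_imp_has_derivative[OF bounded_linear_vec_nth])
  have fi: "((\<lambda>x::real^'n. x$i powr V$j$i) has_derivative (\<lambda>h. x$i powr V$j$i * (h$i * V$j$i) / x$i)) (at x)" for i
    using xi[of i] by (auto intro!: derivative_eq_intros nth)
  have "((\<lambda>x. \<Prod>i\<in>UNIV. x$i powr V$j$i) has_derivative
      (\<lambda>h. \<Sum>i\<in>UNIV. (x$i powr V$j$i * (h$i * V$j$i) / x$i) * (\<Prod>i'\<in>UNIV - {i}. x$i' powr V$j$i'))) (at x)"
    by (rule has_derivative_prod) (rule fi)
  moreover have "(\<lambda>h. \<Sum>i\<in>UNIV. (x$i powr V$j$i * (h$i * V$j$i) / x$i) * (\<Prod>i'\<in>UNIV - {i}. x$i' powr V$j$i'))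
     = (\<lambda>h. monom_vec V x $ j * (\<Sum>i\<in>UNIV. V$j$i * (h$i / x$i)))"
  proof
    fix h
    have eqi: "(x$i powr V$j$i * (h$i * V$j$i) / x$i) * (\<Prod>i'\<in>UNIV - {i}. x$i' powr V$j$i')
        = monom_vec V x $ j * (V$j$i * (h$i / x$i))" for i
    proof -
      have "monom_vec V x $ j = x$i powr V$j$i * (\<Prod>i'\<in>UNIV - {i}. x$i' powr V$j$i')"
        unfolding monom_vec_def by (simp add: prod.remove)
      then show ?thesis by simp
    qed
    show "(\<Sum>i\<in>UNIV. (x$i powr V$j$i * (h$i * V$j$i) / x$i) * (\<Prod>i'\<in>UNIV - {i}. x$i' powr V$j$i'))
        = monom_vec V x $ j * (\<Sum>i\<in>UNIV. V$j$i * (h$i / x$i))"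
      by (subst sum_distrib_left, rule sum.cong[OF refl], rule eqi)
  qed
  ultimately show ?thesis unfolding monom_vec_def by simp
qed

lemma fk_deriv:
  fixes N :: "real^'r^'n" and V :: "real^'n^'r"
  assumes x: "x \<in> pos_orthant"
  shows "(f_kappa N V \<kappa> has_derivative
     (\<lambda>h. N *v hadm (hadm \<kappa> (monom_vec V x)) (V *v hadm (\<chi> i. 1 / x$i) h))) (at x)"
proof -
  have "((\<lambda>y. (\<chi> j. \<kappa> $ j * monom_vec V y $ j) :: real^'r) has_derivative
     (\<lambda>h. \<chi> j. \<kappa> $ j * (monom_vec V x $ j * (\<Sum>i\<in>UNIV. V$j$i * (h$i / x$i))))) (at x)"
    by (intro has_derivative_vec_lambda' has_derivative_mult_right monom_deriv[OF x])
  then have "((\<lambda>y. N *v (\<chi> j. \<kappa> $ j * monom_vec V y $ j)) has_derivative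
     (\<lambda>h. N *v (\<chi> j. \<kappa> $ j * (monom_vec V x $ j * (\<Sum>i\<in>UNIV. V$j$i * (h$i / x$i)))))) (at x)"
    by (rule bounded_linear.has_derivative[OF matrix_vector_mul_bounded_linear])
  moreover have "(\<lambda>h. N *v (\<chi> j. \<kappa> $ j * (monom_vec V x $ j * (\<Sum>i\<in>UNIV. V$j$i * (h$i / x$i)))))
     = (\<lambda>h. N *v hadm (hadm \<kappa> (monom_vec V x)) (V *v hadm (\<chi> i. 1 / x$i) h))"
    by (auto simp: hadm_def matrix_vector_mult_def mult_ac intro!: ext arg_cong[where f="\<lambda>v. N *v v"])
  ultimately show ?thesis unfolding f_kappa_def by simp
qed


(* ---- LA4 ---- *)


lemma prod_enum_set:
  assumes "finite J" "card J = s"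
  shows "(\<Prod>m<s. f (enum_set J m)) = (\<Prod>j\<in>J. f j)"
  using prod.reindex_bij_betw[OF enum_set_bij[OF assms(1)], of f] assms(2) by simp

lemma D4:
  fixes N :: "real^'r^'n" and V :: "real^'n^'r" and b :: "nat \<Rightarrow> real^'n" and cc :: "nat \<Rightarrow> 'r \<Rightarrow> real"
  assumes Nb: "\<And>i j. N $ i $ j = (\<Sum>k<s. b k $ i * cc k j)"
  shows "detL s (\<lambda>k l. \<Sum>j\<in>UNIV. (cc k j * c$j) * (\<Sum>i\<in>UNIV. V$j$i * e$i * b l $ i)) =
   (\<Sum>I | card I = s. \<Sum>J | card J = s. (submat_det N I J * submat_det V J I) * (\<Prod>j\<in>J. c$j) * (\<Prod>i\<in>I. e$i))"
proof -
  define dB where "dB = (\<lambda>I. detL s (\<lambda>t l. b l $ (enum_set I t)))"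
  define dC where "dC = (\<lambda>J. detL s (\<lambda>k m. cc k (enum_set J m)))"
  have a: "detL s (\<lambda>k m. cc k (enum_set J m) * c$(enum_set J m)) = (\<Prod>j\<in>J. c$j) * dC J"
    if "card J = s" for J
    using detL_scale_cols[of s "\<lambda>k m. cc k (enum_set J m)" "\<lambda>m. c$(enum_set J m)"]
      prod_enum_set[of J s "\<lambda>j. c$j"] that unfolding dC_def by simp
  have b: "detL s (\<lambda>m l. \<Sum>i\<in>UNIV. V$(enum_set J m)$i * e$i * b l $ i) =
      (\<Sum>I | card I = s. (\<Prod>i\<in>I. e$i) * submat_det V J I * dB I)"
    if J: "card J = s" for J
  proof -
    have "detL s (\<lambda>m l. \<Sum>i\<in>UNIV. V$(enum_set J m)$i * e$i * b l $ i) =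
      (\<Sum>I | I \<subseteq> UNIV \<and> card I = s. detL s (\<lambda>m t. V$(enum_set J m)$(enum_set I t) * e$(enum_set I t)) *
          detL s (\<lambda>t l. b l $ (enum_set I t)))"
      using cauchy_binet[of UNIV s "\<lambda>m i. V$(enum_set J m)$i * e$i" "\<lambda>i l. b l $ i"] by simp
    also have "\<dots> = (\<Sum>I | card I = s. (\<Prod>i\<in>I. e$i) * submat_det V J I * dB I)"
    proof (rule sum.cong)
      fix I :: "'n set" assume "I \<in> {I. card I = s}"
      then have I: "card I = s" by simp
      have "detL s (\<lambda>m t. V$(enum_set J m)$(enum_set I t) * e$(enum_set I t)) = (\<Prod>i\<in>I. e$i) * submat_det V J I"
        using detL_scale_cols[of s "\<lambda>m t. V$(enum_set J m)$(enum_set I t)" "\<lambda>t. e$(enum_set I t)"]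
          prod_enum_set[of I s "\<lambda>i. e$i"] I J by (simp add: submat_det_detL)
      then show "detL s (\<lambda>m t. V$(enum_set J m)$(enum_set I t) * e$(enum_set I t)) *
          detL s (\<lambda>t l. b l $ (enum_set I t)) = (\<Prod>i\<in>I. e$i) * submat_det V J I * dB I"
        unfolding dB_def by simp
    qed simp
    finally show ?thesis .
  qed
  have c: "submat_det N I J = dB I * dC J" if "card I = s" for I J
  proof -
    have "submat_det N I J = detL s (\<lambda>m k. \<Sum>t<s. b t $ enum_set I m * cc t (enum_set J k))"
      using that by (simp add: submat_det_detL Nb)
    also have "\<dots> = dB I * dC J" unfolding dB_def dC_def by (rule detL_mult)
    finally show ?thesis .
  qed
  have "detL s (\<lambda>k l. \<Sum>j\<in>UNIV. (cc k j * c$j) * (\<Sum>i\<in>UNIV. V$j$i * e$i * b l $ i)) =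
    (\<Sum>J | J \<subseteq> UNIV \<and> card J = s. detL s (\<lambda>k m. cc k (enum_set J m) * c$(enum_set J m)) *
        detL s (\<lambda>m l. \<Sum>i\<in>UNIV. V$(enum_set J m)$i * e$i * b l $ i))"
    using cauchy_binet[of UNIV s "\<lambda>k j. cc k j * c$j" "\<lambda>j l. \<Sum>i\<in>UNIV. V$j$i * e$i * b l $ i"] by simp
  also have "\<dots> = (\<Sum>J | card J = s. \<Sum>I | card I = s. (\<Prod>j\<in>J. c$j) * dC J * ((\<Prod>i\<in>I. e$i) * submat_det V J I * dB I))"
    by (rule sum.cong) (auto simp: a b sum_distrib_left)
  also have "\<dots> = (\<Sum>I | card I = s. \<Sum>J | card J = s. (\<Prod>j\<in>J. c$j) * dC J * ((\<Prod>i\<in>I. e$i) * submat_det V J I * dB I))"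
    by (rule sum.swap)
  also have "\<dots> = (\<Sum>I | card I = s. \<Sum>J | card J = s. (submat_det N I J * submat_det V J I) * (\<Prod>j\<in>J. c$j) * (\<Prod>i\<in>I. e$i))"
    by (intro sum.cong refl) (simp add: c mult_ac)
  finally show ?thesis .
qed


(* ---- PS ---- *)


lemma pow_ratio_tendsto0:
  assumes "k < m"
  shows "((\<lambda>T::real. T^k / T^m) \<longlongrightarrow> 0) at_top"
proof -
  have ev: "eventually (\<lambda>T::real. inverse (T^(m-k)) = T^k / T^m) at_top"
    using eventually_gt_at_top[of "0::real"]
  proof eventually_elim
    case (elim T)
    then have "T^m = T^k * T^(m-k)" using assms by (simp add: power_add[symmetric])
    then show ?case using elim by (simp add: field_simps)
  qed
  have "filterlim (\<lambda>T::real. T^(m-k)) at_top at_top"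
    using assms by (intro filterlim_pow_at_top filterlim_ident) auto
  then have "((\<lambda>T::real. inverse (T^(m-k))) \<longlongrightarrow> 0) at_top"
    by (rule tendsto_inverse_0_at_top)
  then show ?thesis using ev by (rule Lim_transform_eventually)
qed

lemma prod_if_const:
  fixes J J1 :: "'a set"
  assumes "finite J"
  shows "(\<Prod>j\<in>J. if j \<in> J1 then (T::real) else 1) = T ^ card (J \<inter> J1)"
proof -
  have "(\<Prod>j\<in>J. if j \<in> J1 then T else 1) = (\<Prod>j\<in>J \<inter> J1. T)"
    using assms by (simp add: prod.If_cases Int_def)
  then show ?thesis by simp
qed


(* ---- PS2 ---- *)


lemma sgn_close: "\<bar>x - a\<bar> < \<bar>a\<bar> \<Longrightarrow> sgn x = sgn (a::real)"
  by (cases "a > 0") (auto simp: sgn_if abs_if split: if_splits)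

lemma dominant_sign:
  fixes a :: "'n::finite set \<Rightarrow> 'r::finite set \<Rightarrow> real"
  assumes I1: "card I1 = s" and J1: "card J1 = s" and a1: "a I1 J1 \<noteq> 0"
  shows "\<exists>c\<in>pos_orthant. \<exists>e\<in>pos_orthant.
     sgn (\<Sum>I | card I = s. \<Sum>J | card J = s. a I J * (\<Prod>j\<in>J. c$j) * (\<Prod>i\<in>I. e$i)) = sgn (a I1 J1)"
proof -
  define cT where "cT = (\<lambda>T::real. (\<chi> j. if j \<in> J1 then T else 1) :: real^'r)"
  define eT where "eT = (\<lambda>T::real. (\<chi> i. if i \<in> I1 then T else 1) :: real^'n)"
  define m where "m = s + s"
  define kk where "kk = (\<lambda>I J. card (J \<inter> J1) + card (I \<inter> I1))"
  define Q where "Q = (\<lambda>T. \<Sum>I | card I = s. \<Sum>J | card J = s. a I J * (\<Prod>j\<in>J. cT T $j) * (\<Prod>i\<in>I. eT T $i))"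
  have Qeq: "Q T = (\<Sum>I | card I = s. \<Sum>J | card J = s. a I J * T ^ kk I J)" for T
    unfolding Q_def cT_def eT_def kk_def
    by (intro sum.cong refl) (simp add: prod_if_const power_add mult_ac)
  have kk_le: "kk I J \<le> m" if "card I = s" "card J = s" for I J
  proof -
    have "card (J \<inter> J1) \<le> card J" "card (I \<inter> I1) \<le> card I" by (auto intro: card_mono)
    then show ?thesis using that unfolding kk_def m_def by simp
  qed
  have kk_eq: "kk I J = m \<Longrightarrow> I = I1 \<and> J = J1" if "card I = s" "card J = s" for I J
  proof -
    assume "kk I J = m"
    moreover have "card (J \<inter> J1) \<le> card J" "card (I \<inter> I1) \<le> card I" by (auto intro: card_mono)
    ultimately have "card (J \<inter> J1) = card J" "card (I \<inter> I1) = card I" using that unfolding kk_def m_def by auto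
    then have "J \<inter> J1 = J" "I \<inter> I1 = I"
      by (metis Int_lower1 card_subset_eq finite)+
    then have "J \<subseteq> J1" "I \<subseteq> I1" by auto
    then show "I = I1 \<and> J = J1" using that I1 J1
      by (metis card_subset_eq finite)
  qed
  have term_lim: "((\<lambda>T. a I J * (T ^ kk I J / T ^ m)) \<longlongrightarrow> (if I = I1 \<and> J = J1 then a I1 J1 else 0)) at_top"
    if "card I = s" "card J = s" for I J
  proof (cases "I = I1 \<and> J = J1")
    case True
    then have km: "kk I J = m" unfolding kk_def m_def using I1 J1 by simp
    have "eventually (\<lambda>T::real. a I1 J1 = a I J * (T ^ kk I J / T ^ m)) at_top"
      using eventually_gt_at_top[of "0::real"] by eventually_elim (use True km in simp)
    then have "((\<lambda>T. a I J * (T ^ kk I J / T ^ m)) \<longlongrightarrow> a I1 J1) at_top"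
      by (rule Lim_transform_eventually[OF tendsto_const])
    then show ?thesis using True by simp
  next
    case False
    then have "kk I J < m" using kk_le[OF that] kk_eq[OF that] by fastforce
    then have "((\<lambda>T. a I J * (T ^ kk I J / T ^ m)) \<longlongrightarrow> a I J * 0) at_top"
      by (intro tendsto_mult tendsto_const pow_ratio_tendsto0)
    then show ?thesis using False by (simp only: if_False mult_zero_right)
  qed
  have lim: "((\<lambda>T. Q T / T ^ m) \<longlongrightarrow> a I1 J1) at_top"
  proof -
    have "((\<lambda>T. \<Sum>I | card I = s. \<Sum>J | card J = s. a I J * (T ^ kk I J / T ^ m)) \<longlongrightarrow>
       (\<Sum>I | card I = s. \<Sum>J | card J = s. (if I = I1 \<and> J = J1 then a I1 J1 else 0))) at_top"
      by (intro tendsto_sum term_lim) auto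
    also have "(\<Sum>I | card I = s. \<Sum>J | card J = s. (if I = I1 \<and> J = J1 then a I1 J1 else 0)) = a I1 J1"
    proof -
      have "(\<Sum>I | card I = s. \<Sum>J | card J = s. (if I = I1 \<and> J = J1 then a I1 J1 else 0))
          = (\<Sum>I | card I = s. if I = I1 then a I1 J1 else 0)"
        by (intro sum.cong refl) (use J1 in \<open>auto simp: sum.delta'\<close>)
      also have "\<dots> = a I1 J1" using I1 by (simp add: sum.delta')
      finally show ?thesis .
    qed
    finally show ?thesis
      unfolding Qeq by (simp add: sum_divide_distrib mult.assoc)
  qed
  have "eventually (\<lambda>T. dist (Q T / T ^ m) (a I1 J1) < \<bar>a I1 J1\<bar>) at_top"
    using lim a1 by (auto simp: tendsto_iff)
  then have "eventually (\<lambda>T. dist (Q T / T ^ m) (a I1 J1) < \<bar>a I1 J1\<bar> \<and> T > 0) at_top"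
    by (intro eventually_conj eventually_gt_at_top)
  then obtain T0 where T0: "\<And>T. T \<ge> T0 \<Longrightarrow> dist (Q T / T ^ m) (a I1 J1) < \<bar>a I1 J1\<bar> \<and> T > 0"
    unfolding eventually_at_top_linorder by blast
  define T where "T = T0"
  have T: "dist (Q T / T ^ m) (a I1 J1) < \<bar>a I1 J1\<bar>" "T > 0" using T0[of T0] unfolding T_def by auto
  have "sgn (Q T / T ^ m) = sgn (a I1 J1)"
    using T(1) unfolding dist_real_def by (rule sgn_close)
  moreover have "T ^ m > 0" using T(2) by simp
  ultimately have sQ: "sgn (Q T) = sgn (a I1 J1)"
    using T(2) by (simp add: sgn_divide)
  have "cT T \<in> pos_orthant" "eT T \<in> pos_orthant"
    using T(2) unfolding cT_def eT_def pos_orthant_def by auto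
  then show ?thesis using sQ unfolding Q_def by blast
qed


(* ---- PS3 ---- *)


lemma poly_sign:
  fixes a :: "'n::finite set \<Rightarrow> 'r::finite set \<Rightarrow> real"
  shows "(\<forall>c\<in>pos_orthant. \<forall>e\<in>pos_orthant.
      (\<Sum>I | card I = s. \<Sum>J | card J = s. a I J * (\<Prod>j\<in>J. c$j) * (\<Prod>i\<in>I. e$i)) \<noteq> 0)
   \<longleftrightarrow> ((\<forall>I J I' J'. card I = s \<and> card J = s \<and> card I' = s \<and> card J' = s \<and>
            a I J \<noteq> 0 \<and> a I' J' \<noteq> 0 \<longrightarrow> sgn (a I J) = sgn (a I' J'))
        \<and> (\<exists>I J. card I = s \<and> card J = s \<and> a I J \<noteq> 0))"
  (is "?NZ \<longleftrightarrow> ?MIN")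
proof
  define P where "P = (\<lambda>(c::real^'r) (e::real^'n).
     \<Sum>I | card I = s. \<Sum>J | card J = s. a I J * (\<Prod>j\<in>J. c$j) * (\<Prod>i\<in>I. e$i))"
  assume NZ: ?NZ
  have NZ': "P c e \<noteq> 0" if "c \<in> pos_orthant" "e \<in> pos_orthant" for c e
    using NZ that unfolding P_def by blast
  have ex: "\<exists>I J. card I = s \<and> card J = s \<and> a I J \<noteq> 0"
  proof (rule ccontr)
    assume "\<not> ?thesis"
    then have "P (\<chi> _. 1) (\<chi> _. 1) = 0" unfolding P_def by (auto intro!: sum.neutral)
    moreover have "((\<chi> _. 1) :: real^'r) \<in> pos_orthant" "((\<chi> _. 1) :: real^'n) \<in> pos_orthant"
      unfolding pos_orthant_def by auto
    ultimately show False using NZ' by blast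
  qed
  have sg: "sgn (a I J) = sgn (a I' J')"
    if h: "card I = s" "card J = s" "card I' = s" "card J' = s" "a I J \<noteq> 0" "a I' J' \<noteq> 0" for I J I' J'
  proof (rule ccontr)
    assume ne: "sgn (a I J) \<noteq> sgn (a I' J')"
    obtain c1 e1 where ce1: "c1 \<in> pos_orthant" "e1 \<in> pos_orthant" "sgn (P c1 e1) = sgn (a I J)"
      using dominant_sign[of I s J a] h unfolding P_def by blast
    obtain c2 e2 where ce2: "c2 \<in> pos_orthant" "e2 \<in> pos_orthant" "sgn (P c2 e2) = sgn (a I' J')"
      using dominant_sign[of I' s J' a] h unfolding P_def by blast
    define cl where "cl = (\<lambda>t::real. (\<chi> j. c1$j + t * (c2$j - c1$j)) :: real^'r)"
    define el where "el = (\<lambda>t::real. (\<chi> i. e1$i + t * (e2$i - e1$i)) :: real^'n)"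
    define h where "h = (\<lambda>t. P (cl t) (el t))"
    have pos: "cl t \<in> pos_orthant \<and> el t \<in> pos_orthant" if "0 \<le> t" "t \<le> 1" for t
    proof -
      have *: "0 < x + t * (y - x)" if "0 < x" "0 < y" for x y :: real
      proof -
        have "x + t * (y - x) = (1 - t) * x + t * y" by (simp add: algebra_simps)
        moreover have "0 \<le> (1 - t) * x" "0 \<le> t * y" using that \<open>0 \<le> t\<close> \<open>t \<le> 1\<close> by auto
        moreover have "0 < (1 - t) * x \<or> 0 < t * y" using that \<open>0 \<le> t\<close> \<open>t \<le> 1\<close>
          by (cases "t = 1") auto
        ultimately show ?thesis by linarith
      qed
      show ?thesis using ce1 ce2 unfolding cl_def el_def pos_orthant_def by (auto intro: *)
    qed
    have h0: "h 0 = P c1 e1" unfolding h_def cl_def el_def by (simp add: vec_eq_iff)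
    have h1: "h 1 = P c2 e2" unfolding h_def cl_def el_def by (simp add: vec_eq_iff)
    have cont: "continuous_on {0..1} h"
      unfolding h_def P_def cl_def el_def by (intro continuous_intros) 
    have opp: "(h 0 < 0 \<and> 0 < h 1) \<or> (h 1 < 0 \<and> 0 < h 0)"
      using ce1(3) ce2(3) ne h(5,6) unfolding h0 h1 by (auto simp: sgn_if split: if_splits)
    obtain t where t: "0 \<le> t" "t \<le> 1" "h t = 0"
      using opp
    proof
      assume "h 0 < 0 \<and> 0 < h 1"
      then show ?thesis using IVT'[of h 0 0 1] cont that by auto
    next
      assume "h 1 < 0 \<and> 0 < h 0"
      then show ?thesis using IVT2'[of h 1 0 0] cont that by auto
    qed
    then show False using NZ' pos[OF t(1,2)] unfolding h_def by blast
  qed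
  show ?MIN using sg ex by blast
next
  assume MIN: ?MIN
  then obtain I0 J0 where I0: "card I0 = s" "card J0 = s" "a I0 J0 \<noteq> 0" by blast
  define \<sigma> where "\<sigma> = sgn (a I0 J0)"
  have nn: "0 \<le> \<sigma> * a I J" if "card I = s" "card J = s" for I J
  proof (cases "a I J = 0")
    case False
    then have "sgn (a I J) = \<sigma>" using MIN I0 that unfolding \<sigma>_def by blast
    then have "\<sigma> * a I J = \<bar>a I J\<bar>" by (metis abs_sgn mult.commute)
    then show ?thesis by simp
  qed simp
  have p0: "0 < \<sigma> * a I0 J0" using I0 unfolding \<sigma>_def by (simp add: abs_sgn[symmetric] mult.commute)
  show ?NZ
  proof (intro ballI)
    fix c :: "real^'r" and e :: "real^'n" assume c: "c \<in> pos_orthant" and e: "e \<in> pos_orthant"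
    have pc: "0 < (\<Prod>j\<in>J. c$j)" for J using c unfolding pos_orthant_def by (auto intro: prod_pos)
    have pe: "0 < (\<Prod>i\<in>I. e$i)" for I using e unfolding pos_orthant_def by (auto intro: prod_pos)
    have tnn: "0 \<le> \<sigma> * (a I J * (\<Prod>j\<in>J. c$j) * (\<Prod>i\<in>I. e$i))" if "card I = s" "card J = s" for I J
    proof -
      have "\<sigma> * (a I J * (\<Prod>j\<in>J. c$j) * (\<Prod>i\<in>I. e$i)) = (\<sigma> * a I J) * ((\<Prod>j\<in>J. c$j) * (\<Prod>i\<in>I. e$i))"
        by (simp add: mult_ac)
      moreover have "0 \<le> (\<sigma> * a I J) * ((\<Prod>j\<in>J. c$j) * (\<Prod>i\<in>I. e$i))"
        using nn[OF that] pc[of J] pe[of I] by (metis less_imp_le mult_nonneg_nonneg)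
      ultimately show ?thesis by simp
    qed
    have tp: "0 < \<sigma> * (a I0 J0 * (\<Prod>j\<in>J0. c$j) * (\<Prod>i\<in>I0. e$i))"
    proof -
      have "\<sigma> * (a I0 J0 * (\<Prod>j\<in>J0. c$j) * (\<Prod>i\<in>I0. e$i)) = (\<sigma> * a I0 J0) * ((\<Prod>j\<in>J0. c$j) * (\<Prod>i\<in>I0. e$i))"
        by (simp add: mult_ac)
      moreover have "0 < (\<sigma> * a I0 J0) * ((\<Prod>j\<in>J0. c$j) * (\<Prod>i\<in>I0. e$i))"
        using p0 pc[of J0] pe[of I0] by (metis mult_pos_pos)
      ultimately show ?thesis by simp
    qed
    have "0 < (\<Sum>I | card I = s. \<Sum>J | card J = s. \<sigma> * (a I J * (\<Prod>j\<in>J. c$j) * (\<Prod>i\<in>I. e$i)))"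
    proof (rule sum_pos2[where i=I0])
      show "0 < (\<Sum>J | card J = s. \<sigma> * (a I0 J * (\<Prod>j\<in>J. c$j) * (\<Prod>i\<in>I0. e$i)))"
        by (rule sum_pos2[where i=J0]) (use I0 tp tnn in auto)
      show "\<And>I. I \<in> {I. card I = s} \<Longrightarrow> 0 \<le> (\<Sum>J | card J = s. \<sigma> * (a I J * (\<Prod>j\<in>J. c$j) * (\<Prod>i\<in>I. e$i)))"
        by (rule sum_nonneg) (use tnn in auto)
    qed (use I0 in auto)
    then have "0 < \<sigma> * (\<Sum>I | card I = s. \<Sum>J | card J = s. a I J * (\<Prod>j\<in>J. c$j) * (\<Prod>i\<in>I. e$i))"
      by (simp add: sum_distrib_left)
    then show "(\<Sum>I | card I = s. \<Sum>J | card J = s. a I J * (\<Prod>j\<in>J. c$j) * (\<Prod>i\<in>I. e$i)) \<noteq> 0"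
      by auto
  qed
qed


(* ---- LA5 ---- *)


definition core :: "real^'r^'n \<Rightarrow> real^'n^'r \<Rightarrow> bool" where
  "core N V \<longleftrightarrow> (\<forall>c\<in>pos_orthant. \<forall>e\<in>pos_orthant. \<forall>u\<in>range (\<lambda>y. N *v y).
      N *v hadm c (V *v hadm e u) = 0 \<longrightarrow> u = 0)"

lemma core_min:
  fixes N :: "real^'r^'n" and V :: "real^'n^'r"
  shows "core N V \<longleftrightarrow>
   ((\<forall>I J I' J'. card I = rank N \<and> card J = rank N \<and> card I' = rank N \<and> card J' = rank N \<and>
            submat_det N I J * submat_det V J I \<noteq> 0 \<and>
            submat_det N I' J' * submat_det V J' I' \<noteq> 0 \<longrightarrow>
            sgn (submat_det N I J * submat_det V J I) =
            sgn (submat_det N I' J' * submat_det V J' I'))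
        \<and> (\<exists>I J. card I = rank N \<and> card J = rank N \<and> submat_det N I J * submat_det V J I \<noteq> 0))"
proof -
  let ?s = "rank N"
  let ?S = "range (\<lambda>y. N *v y)"
  obtain b cc where b1: "\<And>k. k < ?s \<Longrightarrow> b k \<in> ?S"
    and b2: "\<And>u. u \<in> ?S \<Longrightarrow> \<exists>w. u = (\<Sum>k<?s. w k *\<^sub>R b k)"
    and b3: "\<And>w k. (\<Sum>k<?s. w k *\<^sub>R b k) = 0 \<Longrightarrow> k < ?s \<Longrightarrow> w k = 0"
    and Nb: "\<And>i j. N $ i $ j = (\<Sum>k<?s. b k $ i * cc k j)"
    by (rule obtain_basis[of N]) blast
  define G where "G = (\<lambda>c e k l. \<Sum>j\<in>UNIV. (cc k j * c$j) * (\<Sum>i\<in>UNIV. V$j$i * e$i * b l $ i))"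
  have D2: "(\<forall>u\<in>?S. N *v hadm c (V *v hadm e u) = 0 \<longrightarrow> u = 0) \<longleftrightarrow>
     (\<forall>w. (\<forall>k<?s. (\<Sum>l<?s. G c e k l * w l) = 0) \<longrightarrow> (\<forall>l<?s. w l = 0))" for c e
  proof
    assume H: "\<forall>u\<in>?S. N *v hadm c (V *v hadm e u) = 0 \<longrightarrow> u = 0"
    show "\<forall>w. (\<forall>k<?s. (\<Sum>l<?s. G c e k l * w l) = 0) \<longrightarrow> (\<forall>l<?s. w l = 0)"
    proof (intro allI impI)
      fix w l assume Gw: "\<forall>k<?s. (\<Sum>l<?s. G c e k l * w l) = 0" and l: "l < ?s"
      let ?u = "\<Sum>l<?s. w l *\<^sub>R b l"
      have uS: "?u \<in> ?S"
        by (rule subspace_sum[OF subspace_range_mv]) (auto intro: subspace_scale[OF subspace_range_mv] b1)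
      have "N *v hadm c (V *v hadm e ?u) = (\<Sum>k<?s. (\<Sum>l<?s. G c e k l * w l) *\<^sub>R b k)"
        unfolding G_def by (rule D1[OF Nb])
      also have "\<dots> = 0" using Gw by (intro sum.neutral) auto
      finally have "?u = 0" using H uS by blast
      then show "w l = 0" using b3 l by blast
    qed
  next
    assume H: "\<forall>w. (\<forall>k<?s. (\<Sum>l<?s. G c e k l * w l) = 0) \<longrightarrow> (\<forall>l<?s. w l = 0)"
    show "\<forall>u\<in>?S. N *v hadm c (V *v hadm e u) = 0 \<longrightarrow> u = 0"
    proof (intro ballI impI)
      fix u assume uS: "u \<in> ?S" and eq: "N *v hadm c (V *v hadm e u) = 0"
      obtain w where w: "u = (\<Sum>l<?s. w l *\<^sub>R b l)" using b2[OF uS] by blast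
      have "(\<Sum>k<?s. (\<Sum>l<?s. G c e k l * w l) *\<^sub>R b k) = 0"
        using eq unfolding w G_def by (simp add: D1[OF Nb])
      then have "\<forall>k<?s. (\<Sum>l<?s. G c e k l * w l) = 0"
        using b3[of "\<lambda>k. \<Sum>l<?s. G c e k l * w l"] by blast
      then have "\<forall>l<?s. w l = 0" using H by blast
      then show "u = 0" unfolding w by (intro sum.neutral) auto
    qed
  qed
  have "core N V \<longleftrightarrow> (\<forall>c\<in>pos_orthant. \<forall>e\<in>pos_orthant. detL ?s (G c e) \<noteq> 0)"
    unfolding core_def D2 detL_nonzero_iff by blast
  also have "\<dots> \<longleftrightarrow> (\<forall>c\<in>pos_orthant. \<forall>e\<in>pos_orthant.
      (\<Sum>I | card I = ?s. \<Sum>J | card J = ?s. (submat_det N I J * submat_det V J I) * (\<Prod>j\<in>J. c$j) * (\<Prod>i\<in>I. e$i)) \<noteq> 0)"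
    unfolding G_def D4[OF Nb] ..
  also have "\<dots> \<longleftrightarrow> ((\<forall>I J I' J'. card I = rank N \<and> card J = rank N \<and> card I' = rank N \<and> card J' = rank N \<and>
            submat_det N I J * submat_det V J I \<noteq> 0 \<and>
            submat_det N I' J' * submat_det V J' I' \<noteq> 0 \<longrightarrow>
            sgn (submat_det N I J * submat_det V J I) =
            sgn (submat_det N I' J' * submat_det V J' I'))
        \<and> (\<exists>I J. card I = rank N \<and> card J = rank N \<and> submat_det N I J * submat_det V J I \<noteq> 0))"
    by (rule poly_sign[where a="\<lambda>I J. submat_det N I J * submat_det V J I" and s="rank N"])
  finally show ?thesis .
qed


(* ---- LB ---- *)


lemma hadm_diff: "hadm c (x - y) = hadm c x - hadm c y"
  by (simp add: hadm_def Finite_Cartesian_Product.vec_eq_iff algebra_simps)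

lemma hadm_zero: "hadm c 0 = 0"
  by (simp add: hadm_def Finite_Cartesian_Product.vec_eq_iff)

lemma inj_lin:
  fixes N :: "real^'r^'n" and V :: "real^'n^'r"
  assumes S: "subspace S"
  shows "inj_on (\<lambda>v. N *v hadm c (V *v hadm e v)) S \<longleftrightarrow> (\<forall>u\<in>S. N *v hadm c (V *v hadm e u) = 0 \<longrightarrow> u = 0)"
proof -
  have L: "N *v hadm c (V *v hadm e (a - b)) = N *v hadm c (V *v hadm e a) - N *v hadm c (V *v hadm e b)" for a b
    by (simp add: hadm_diff matrix_vector_mult_diff_distrib)
  have L0: "N *v hadm c (V *v hadm e 0) = 0" by (simp add: hadm_zero)
  show ?thesis
  proof
    assume inj: "inj_on (\<lambda>v. N *v hadm c (V *v hadm e v)) S"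
    show "\<forall>u\<in>S. N *v hadm c (V *v hadm e u) = 0 \<longrightarrow> u = 0"
      using inj L0 subspace_0[OF S] unfolding inj_on_def by metis
  next
    assume H: "\<forall>u\<in>S. N *v hadm c (V *v hadm e u) = 0 \<longrightarrow> u = 0"
    show "inj_on (\<lambda>v. N *v hadm c (V *v hadm e v)) S"
    proof (rule inj_onI)
      fix a b assume ab: "a \<in> S" "b \<in> S" "N *v hadm c (V *v hadm e a) = N *v hadm c (V *v hadm e b)"
      then have "N *v hadm c (V *v hadm e (a - b)) = 0" by (simp add: L)
      then have "a - b = 0" using H subspace_diff[OF S ab(1,2)] by blast
      then show "a = b" by simp
    qed
  qed
qed

lemma jac_eq:
  fixes N :: "real^'r^'n" and V :: "real^'n^'r"
  assumes x: "x \<in> pos_orthant"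
  shows "jacobian (f_kappa N V \<kappa>) (at x) *v v = N *v hadm (hadm \<kappa> (monom_vec V x)) (V *v hadm (\<chi> i. 1 / x$i) v)"
proof -
  note D = fk_deriv[OF x, of N V \<kappa>]
  then have "f_kappa N V \<kappa> differentiable (at x)" by (rule differentiableI)
  then have "(f_kappa N V \<kappa> has_derivative (\<lambda>h. jacobian (f_kappa N V \<kappa>) (at x) *v h)) (at x)"
    by (simp add: jacobian_works)
  from has_derivative_unique[OF this D] show ?thesis by (rule fun_cong)
qed

lemma pos_orthantI: "(\<And>i. x $ i > 0) \<Longrightarrow> x \<in> pos_orthant"
  unfolding pos_orthant_def by auto

lemma pos_orthantD: "x \<in> pos_orthant \<Longrightarrow> x $ i > 0"
  unfolding pos_orthant_def by auto

lemma jac_core: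
  fixes N :: "real^'r^'n" and V :: "real^'n^'r"
  shows "(\<forall>\<kappa>\<in>pos_orthant. \<forall>x\<in>pos_orthant.
        inj_on (\<lambda>v. jacobian (f_kappa N V \<kappa>) (at x) *v v) (range (\<lambda>y. N *v y))) \<longleftrightarrow> core N V"
proof -
  let ?S = "range (\<lambda>y. N *v y)"
  have "(\<forall>\<kappa>\<in>pos_orthant. \<forall>x\<in>pos_orthant. inj_on (\<lambda>v. jacobian (f_kappa N V \<kappa>) (at x) *v v) ?S) \<longleftrightarrow>
     (\<forall>\<kappa>\<in>pos_orthant. \<forall>x\<in>pos_orthant. \<forall>u\<in>?S.
        N *v hadm (hadm \<kappa> (monom_vec V x)) (V *v hadm (\<chi> i. 1 / x$i) u) = 0 \<longrightarrow> u = 0)"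
    by (simp add: jac_eq inj_lin[OF subspace_range_mv] cong: inj_on_cong)
  also have "\<dots> \<longleftrightarrow> core N V"
  proof
    assume H: "\<forall>\<kappa>\<in>pos_orthant. \<forall>x\<in>pos_orthant. \<forall>u\<in>?S.
        N *v hadm (hadm \<kappa> (monom_vec V x)) (V *v hadm (\<chi> i. 1 / x$i) u) = 0 \<longrightarrow> u = 0"
    show "core N V" unfolding core_def
    proof (intro ballI impI)
      fix c :: "real^'r" and e :: "real^'n" and u assume c: "c \<in> pos_orthant" and e: "e \<in> pos_orthant" and u: "u \<in> ?S"
        and eq: "N *v hadm c (V *v hadm e u) = 0"
      define x where "x = (\<chi> i. 1 / e$i)"
      have x: "x \<in> pos_orthant" unfolding x_def using e by (auto intro!: pos_orthantI dest: pos_orthantD)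
      define \<kappa> where "\<kappa> = (\<chi> j. c$j / monom_vec V x $ j)"
      have k: "\<kappa> \<in> pos_orthant" unfolding \<kappa>_def using pos_orthantD[OF c] monom_pos[OF x, of V]
        by (auto intro!: pos_orthantI divide_pos_pos)
      have "hadm \<kappa> (monom_vec V x) = c"
        using monom_pos[OF x, of V] by (simp add: hadm_def \<kappa>_def Finite_Cartesian_Product.vec_eq_iff less_imp_neq[symmetric])
      moreover have "(\<chi> i. 1 / x$i) = e" by (simp add: x_def Finite_Cartesian_Product.vec_eq_iff)
      ultimately show "u = 0" using H k x u eq by auto
    qed
  next
    assume C: "core N V"
    show "\<forall>\<kappa>\<in>pos_orthant. \<forall>x\<in>pos_orthant. \<forall>u\<in>?S.
        N *v hadm (hadm \<kappa> (monom_vec V x)) (V *v hadm (\<chi> i. 1 / x$i) u) = 0 \<longrightarrow> u = 0"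
    proof (intro ballI)
      fix \<kappa> :: "real^'r" and x :: "real^'n" and u assume k: "\<kappa> \<in> pos_orthant" and x: "x \<in> pos_orthant" and u: "u \<in> ?S"
      have "hadm \<kappa> (monom_vec V x) \<in> pos_orthant"
        using pos_orthantD[OF k] monom_pos[OF x, of V] by (auto simp: hadm_def intro!: pos_orthantI mult_pos_pos)
      moreover have "(\<chi> i. 1 / x$i) \<in> pos_orthant" using x by (auto intro!: pos_orthantI dest: pos_orthantD)
      ultimately show "N *v hadm (hadm \<kappa> (monom_vec V x)) (V *v hadm (\<chi> i. 1 / x$i) u) = 0 \<longrightarrow> u = 0"
        using C u unfolding core_def by blast
    qed
  qed
  finally show ?thesis .
qed


(* ---- LC ---- *)


lemma sign_vec_eqD: "sign_vec a = sign_vec b \<Longrightarrow> sgn (a$i) = sgn (b$i)"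
  unfolding sign_vec_def by (metis vec_lambda_beta)

lemma sign_vec_eqI: "(\<And>i. sgn (a$i) = sgn (b$i)) \<Longrightarrow> sign_vec a = sign_vec b"
  unfolding sign_vec_def by (simp add: Finite_Cartesian_Product.vec_eq_iff)

lemma sign_vec_hadm: "c \<in> pos_orthant \<Longrightarrow> sign_vec (hadm c y) = sign_vec y"
proof (rule sign_vec_eqI)
  fix i assume "c \<in> pos_orthant"
  then have "c$i > 0" by (rule pos_orthantD)
  then show "sgn (hadm c y $ i) = sgn (y $ i)" by (simp add: hadm_def sgn_mult)
qed

lemma sgn_eq_div_pos: "sgn x = sgn y \<Longrightarrow> x \<noteq> 0 \<Longrightarrow> y / x > (0::real)"
  by (cases "x > 0"; cases "y > 0") (auto simp: sgn_if split: if_splits intro: divide_pos_neg divide_neg_neg)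

lemma sgn_eq_zero: "sgn x = sgn y \<Longrightarrow> x = 0 \<Longrightarrow> y = (0::real)"
  by (metis sgn_0_0)

lemma hadm_realize:
  assumes "sign_vec a = sign_vec b"
  shows "\<exists>c\<in>pos_orthant. hadm c a = b"
proof -
  have s: "sgn (a$i) = sgn (b$i)" for i using sign_vec_eqD[OF assms] .
  define c where "c = (\<chi> i. if a$i = 0 then 1 else b$i / a$i)"
  have "c$i > 0" for i
  proof (cases "a$i = 0")
    case False
    then have "b$i / a$i > 0" using s[of i] by (intro sgn_eq_div_pos) auto
    moreover have "c$i = b$i / a$i" using False unfolding c_def by simp
    ultimately show ?thesis by simp
  qed (simp add: c_def)
  moreover have "hadm c a = b"
  proof -
    have "c$i * a$i = b$i" for i
    proof (cases "a$i = 0")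
      case True
      then have "b$i = 0" using s[of i] by (metis sgn_eq_zero)
      then show ?thesis using True by simp
    qed (simp add: c_def)
    then show ?thesis by (simp add: hadm_def Finite_Cartesian_Product.vec_eq_iff)
  qed
  ultimately show ?thesis by (auto intro: pos_orthantI)
qed

lemma sig_iff:
  fixes N :: "real^'r^'n" and V :: "real^'n^'r"
  shows "(sign_vec ` {y. N *v y = 0} \<inter> sign_vec ` ((\<lambda>z. V *v z) ` Sigma_set (S - {0})) = {}) \<longleftrightarrow>
  \<not>(\<exists>y z u. N *v y = 0 \<and> u \<in> S \<and> u \<noteq> 0 \<and> sign_vec z = sign_vec u \<and> sign_vec y = sign_vec (V *v z))"
  unfolding Sigma_set_def by blast

lemma core_sig:
  fixes N :: "real^'r^'n" and V :: "real^'n^'r"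
  shows "core N V \<longleftrightarrow> (sign_vec ` {y. N *v y = 0} \<inter>
      sign_vec ` ((\<lambda>z. V *v z) ` Sigma_set (range (\<lambda>y. N *v y) - {0})) = {})"
  unfolding sig_iff
proof
  assume C: "core N V"
  show "\<not>(\<exists>y z u. N *v y = 0 \<and> u \<in> range (\<lambda>y. N *v y) \<and> u \<noteq> 0 \<and> sign_vec z = sign_vec u \<and> sign_vec y = sign_vec (V *v z))"
  proof
    assume "\<exists>y z u. N *v y = 0 \<and> u \<in> range (\<lambda>y. N *v y) \<and> u \<noteq> 0 \<and> sign_vec z = sign_vec u \<and> sign_vec y = sign_vec (V *v z)"
    then obtain y z u where h: "N *v y = 0" "u \<in> range (\<lambda>y. N *v y)" "u \<noteq> 0" "sign_vec z = sign_vec u" "sign_vec y = sign_vec (V *v z)"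
      by blast
    obtain e where e: "e \<in> pos_orthant" "hadm e u = z" using hadm_realize[of u z] h(4) by metis
    obtain c where c: "c \<in> pos_orthant" "hadm c (V *v z) = y" using hadm_realize[of "V *v z" y] h(5) by metis
    have "N *v hadm c (V *v hadm e u) = 0" using e c h(1) by simp
    then have "u = 0" using C c(1) e(1) h(2) unfolding core_def by blast
    then show False using h(3) by simp
  qed
next
  assume H: "\<not>(\<exists>y z u. N *v y = 0 \<and> u \<in> range (\<lambda>y. N *v y) \<and> u \<noteq> 0 \<and> sign_vec z = sign_vec u \<and> sign_vec y = sign_vec (V *v z))"
  show "core N V" unfolding core_def
  proof (intro ballI impI)
    fix c :: "real^'r" and e :: "real^'n" and u assume c: "c \<in> pos_orthant" and e: "e \<in> pos_orthant"
      and u: "u \<in> range (\<lambda>y. N *v y)" and eq: "N *v hadm c (V *v hadm e u) = 0"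
    show "u = 0"
    proof (rule ccontr)
      assume "u \<noteq> 0"
      moreover have "sign_vec (hadm e u) = sign_vec u" by (rule sign_vec_hadm[OF e])
      moreover have "sign_vec (hadm c (V *v hadm e u)) = sign_vec (V *v hadm e u)" by (rule sign_vec_hadm[OF c])
      ultimately show False using H eq u by blast
    qed
  qed
qed


(* ---- LD ---- *)


lemma ln_sign: "a > 0 \<Longrightarrow> b > 0 \<Longrightarrow> sgn (ln a - ln b) = sgn (a - (b::real))"
proof -
  assume a: "a > 0" and b: "b > 0"
  consider "a < b" | "a = b" | "a > b" by linarith
  then show ?thesis
  proof cases
    case 1 then have "ln a < ln b" using a b by simp
    then show ?thesis using 1 by simp
  next
    case 3 then have "ln a > ln b" using a b by simp
    then show ?thesis using 3 by simp
  qed simp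
qed

lemma ln_monom:
  assumes x: "x \<in> pos_orthant"
  shows "ln (monom_vec V x $ j) = (\<Sum>i\<in>UNIV. V$j$i * ln (x$i))"
proof -
  have "ln (monom_vec V x $ j) = (\<Sum>i\<in>UNIV. ln (x$i powr V$j$i))"
    unfolding monom_vec_def using pos_orthantD[OF x]
    by (simp add: ln_prod less_imp_neq[symmetric])
  then show ?thesis by (simp add: ln_powr)
qed

lemma monom_diff_sign:
  assumes x: "x \<in> pos_orthant" and y: "y \<in> pos_orthant"
  shows "sign_vec (monom_vec V x - monom_vec V y) = sign_vec (V *v (\<chi> i. ln (x$i) - ln (y$i)))"
proof (rule sign_vec_eqI)
  fix j
  have "(V *v (\<chi> i. ln (x$i) - ln (y$i))) $ j = (\<Sum>i\<in>UNIV. V$j$i * ln (x$i)) - (\<Sum>i\<in>UNIV. V$j$i * ln (y$i))"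
    by (simp add: matrix_vector_mult_def right_diff_distrib sum_subtractf)
  also have "\<dots> = ln (monom_vec V x $ j) - ln (monom_vec V y $ j)"
    by (simp add: ln_monom[OF x] ln_monom[OF y])
  finally have "sgn ((V *v (\<chi> i. ln (x$i) - ln (y$i))) $ j) = sgn (monom_vec V x $ j - monom_vec V y $ j)"
    using ln_sign[OF monom_pos[OF x] monom_pos[OF y]] by simp
  then show "sgn ((monom_vec V x - monom_vec V y) $ j) = sgn ((V *v (\<chi> i. ln (x$i) - ln (y$i))) $ j)"
    by simp
qed

lemma fk_diff: "f_kappa N V \<kappa> x - f_kappa N V \<kappa> y = N *v hadm \<kappa> (monom_vec V x - monom_vec V y)"
proof -
  have "f_kappa N V \<kappa> z = N *v hadm \<kappa> (monom_vec V z)" for z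
    unfolding f_kappa_def hadm_def ..
  then show ?thesis by (simp add: hadm_diff matrix_vector_mult_diff_distrib)
qed

lemma construct_xy:
  assumes s: "sign_vec z = sign_vec u"
  shows "\<exists>x\<in>pos_orthant. \<exists>y\<in>pos_orthant. x - y = u \<and> (\<chi> i. ln (x$i) - ln (y$i)) = z"
proof -
  define yy where "yy = (\<chi> i. if u$i = 0 then 1 else u$i / (exp (z$i) - 1))"
  define xx where "xx = (\<chi> i. yy$i * exp (z$i))"
  have main: "yy$i > 0 \<and> xx$i > 0 \<and> xx$i - yy$i = u$i \<and> ln (xx$i) - ln (yy$i) = z$i" for i
  proof (cases "u$i = 0")
    case True
    then have "z$i = 0" using sign_vec_eqD[OF s, of i] by (metis sgn_eq_zero)
    then show ?thesis using True unfolding xx_def yy_def by simp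
  next
    case False
    have szu: "sgn (z$i) = sgn (u$i)" using sign_vec_eqD[OF s, of i] .
    have "sgn (exp (z$i) - 1) = sgn (z$i)"
    proof -
      consider "z$i < 0" | "z$i = 0" | "z$i > 0" by linarith
      then show ?thesis by cases auto
    qed
    then have ee: "sgn (exp (z$i) - 1) = sgn (u$i)" using szu by simp
    have e0: "exp (z$i) - 1 \<noteq> 0" using ee False by (metis sgn_eq_zero)
    have yp: "yy$i > 0" unfolding yy_def using False sgn_eq_div_pos[OF ee e0] by simp
    have xp: "xx$i > 0" unfolding xx_def using yp by simp
    have "xx$i - yy$i = yy$i * (exp (z$i) - 1)" unfolding xx_def by (simp add: algebra_simps)
    also have "\<dots> = u$i" unfolding yy_def using False e0 by simp
    finally have d: "xx$i - yy$i = u$i" .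
    have "ln (xx$i) = ln (yy$i) + z$i" unfolding xx_def using yp by (simp add: ln_mult)
    then show ?thesis using yp xp d by simp
  qed
  have "xx \<in> pos_orthant" "yy \<in> pos_orthant" using main by (auto intro: pos_orthantI)
  moreover have "xx - yy = u" using main by (simp add: Finite_Cartesian_Product.vec_eq_iff)
  moreover have "(\<chi> i. ln (xx$i) - ln (yy$i)) = z" using main by (simp add: Finite_Cartesian_Product.vec_eq_iff)
  ultimately show ?thesis by blast
qed

lemma noninj_iff:
  fixes N :: "real^'r^'n" and V :: "real^'n^'r"
  shows "(\<forall>\<kappa>\<in>pos_orthant. \<forall>x'\<in>pos_orthant.
        inj_on (f_kappa N V \<kappa>) ((\<lambda>y. x' + y) ` range (\<lambda>y. N *v y) \<inter> pos_orthant)) \<longleftrightarrow>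
    \<not>(\<exists>\<kappa>\<in>pos_orthant. \<exists>x\<in>pos_orthant. \<exists>y\<in>pos_orthant. x \<noteq> y \<and> x - y \<in> range (\<lambda>y. N *v y) \<and>
       N *v hadm \<kappa> (monom_vec V x - monom_vec V y) = 0)"
proof
  let ?S = "range (\<lambda>y. N *v y)"
  assume I: "\<forall>\<kappa>\<in>pos_orthant. \<forall>x'\<in>pos_orthant. inj_on (f_kappa N V \<kappa>) ((\<lambda>y. x' + y) ` ?S \<inter> pos_orthant)"
  show "\<not>(\<exists>\<kappa>\<in>pos_orthant. \<exists>x\<in>pos_orthant. \<exists>y\<in>pos_orthant. x \<noteq> y \<and> x - y \<in> ?S \<and>
       N *v hadm \<kappa> (monom_vec V x - monom_vec V y) = 0)"
  proof
    assume "\<exists>\<kappa>\<in>pos_orthant. \<exists>x\<in>pos_orthant. \<exists>y\<in>pos_orthant. x \<noteq> y \<and> x - y \<in> ?S \<and>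
       N *v hadm \<kappa> (monom_vec V x - monom_vec V y) = 0"
    then obtain \<kappa> x y where h: "\<kappa> \<in> pos_orthant" "x \<in> pos_orthant" "y \<in> pos_orthant" "x \<noteq> y" "x - y \<in> ?S"
      "N *v hadm \<kappa> (monom_vec V x - monom_vec V y) = 0" by blast
    have "x \<in> (\<lambda>v. y + v) ` ?S \<inter> pos_orthant"
    proof -
      have "x = y + (x - y)" by simp
      then have "x \<in> (\<lambda>v. y + v) ` ?S" using h(5) by (rule image_eqI)
      then show ?thesis using h(2) by simp
    qed
    moreover have "y \<in> (\<lambda>v. y + v) ` ?S \<inter> pos_orthant"
      using h(3) subspace_0[OF subspace_range_mv[of N]] by (auto intro!: image_eqI[where x=0])
    moreover have "f_kappa N V \<kappa> x = f_kappa N V \<kappa> y"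
      using fk_diff[of N V \<kappa> x y] h(6) by simp
    ultimately show False using I h(1,3,4) unfolding inj_on_def by blast
  qed
next
  let ?S = "range (\<lambda>y. N *v y)"
  assume H: "\<not>(\<exists>\<kappa>\<in>pos_orthant. \<exists>x\<in>pos_orthant. \<exists>y\<in>pos_orthant. x \<noteq> y \<and> x - y \<in> ?S \<and>
       N *v hadm \<kappa> (monom_vec V x - monom_vec V y) = 0)"
  show "\<forall>\<kappa>\<in>pos_orthant. \<forall>x'\<in>pos_orthant. inj_on (f_kappa N V \<kappa>) ((\<lambda>y. x' + y) ` ?S \<inter> pos_orthant)"
  proof (intro ballI inj_onI)
    fix \<kappa> x' p q
    assume k: "\<kappa> \<in> pos_orthant" and p: "p \<in> (\<lambda>y. x' + y) ` ?S \<inter> pos_orthant"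
      and q: "q \<in> (\<lambda>y. x' + y) ` ?S \<inter> pos_orthant" and eq: "f_kappa N V \<kappa> p = f_kappa N V \<kappa> q"
    obtain a b where ab: "p = x' + a" "q = x' + b" "a \<in> ?S" "b \<in> ?S" using p q by blast
    have "p - q = a - b" using ab by simp
    then have pq: "p - q \<in> ?S" using subspace_diff[OF subspace_range_mv ab(3,4)] by simp
    have "N *v hadm \<kappa> (monom_vec V p - monom_vec V q) = 0"
      using fk_diff[of N V \<kappa> p q] eq by simp
    then show "p = q" using H k p q pq by blast
  qed
qed

lemma inj_sig:
  fixes N :: "real^'r^'n" and V :: "real^'n^'r"
  shows "(\<forall>\<kappa>\<in>pos_orthant. \<forall>x'\<in>pos_orthant.
        inj_on (f_kappa N V \<kappa>) ((\<lambda>y. x' + y) ` range (\<lambda>y. N *v y) \<inter> pos_orthant)) \<longleftrightarrow>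
    (sign_vec ` {y. N *v y = 0} \<inter>
      sign_vec ` ((\<lambda>z. V *v z) ` Sigma_set (range (\<lambda>y. N *v y) - {0})) = {})"
  unfolding noninj_iff sig_iff
proof (rule iffI; erule contrapos_nn)
  let ?S = "range (\<lambda>y. N *v y)"
  assume "\<exists>y z u. N *v y = 0 \<and> u \<in> ?S \<and> u \<noteq> 0 \<and> sign_vec z = sign_vec u \<and> sign_vec y = sign_vec (V *v z)"
  then obtain y0 z u where h: "N *v y0 = 0" "u \<in> ?S" "u \<noteq> 0" "sign_vec z = sign_vec u" "sign_vec y0 = sign_vec (V *v z)"
    by blast
  obtain x y where xy: "x \<in> pos_orthant" "y \<in> pos_orthant" "x - y = u" "(\<chi> i. ln (x$i) - ln (y$i)) = z"
    using construct_xy[OF h(4)] by blast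
  have "sign_vec (monom_vec V x - monom_vec V y) = sign_vec y0"
    using monom_diff_sign[OF xy(1,2), of V] xy(4) h(5) by simp
  then obtain \<kappa> where k: "\<kappa> \<in> pos_orthant" "hadm \<kappa> (monom_vec V x - monom_vec V y) = y0"
    using hadm_realize by blast
  show "\<exists>\<kappa>\<in>pos_orthant. \<exists>x\<in>pos_orthant. \<exists>y\<in>pos_orthant. x \<noteq> y \<and> x - y \<in> ?S \<and>
       N *v hadm \<kappa> (monom_vec V x - monom_vec V y) = 0"
    using k xy h by (intro bexI[OF _ k(1)] bexI[OF _ xy(1)] bexI[OF _ xy(2)]) auto
next
  let ?S = "range (\<lambda>y. N *v y)"
  assume "\<exists>\<kappa>\<in>pos_orthant. \<exists>x\<in>pos_orthant. \<exists>y\<in>pos_orthant. x \<noteq> y \<and> x - y \<in> ?S \<and>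
       N *v hadm \<kappa> (monom_vec V x - monom_vec V y) = 0"
  then obtain \<kappa> x y where h: "\<kappa> \<in> pos_orthant" "x \<in> pos_orthant" "y \<in> pos_orthant" "x \<noteq> y" "x - y \<in> ?S"
      "N *v hadm \<kappa> (monom_vec V x - monom_vec V y) = 0" by blast
  define z where "z = (\<chi> i. ln (x$i) - ln (y$i))"
  have sz: "sign_vec z = sign_vec (x - y)"
    unfolding z_def using ln_sign pos_orthantD[OF h(2)] pos_orthantD[OF h(3)]
    by (intro sign_vec_eqI) simp
  have sy: "sign_vec (hadm \<kappa> (monom_vec V x - monom_vec V y)) = sign_vec (V *v z)"
    unfolding z_def sign_vec_hadm[OF h(1)] by (rule monom_diff_sign[OF h(2,3)])
  show "\<exists>y z u. N *v y = 0 \<and> u \<in> ?S \<and> u \<noteq> 0 \<and> sign_vec z = sign_vec u \<and> sign_vec y = sign_vec (V *v z)"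
    using h(4,5,6) sz sy by (intro exI[of _ "hadm \<kappa> (monom_vec V x - monom_vec V y)"] exI[of _ z] exI[of _ "x - y"]) auto
qed


(* ---- MainT ---- *)


theorem mainTheorem16:
  fixes N :: "real^'r^'n" and V :: "real^'n^'r"
  defines "S \<equiv> range (\<lambda>y. N *v y)"
    and "s \<equiv> rank N"
  shows
   "((\<forall>\<kappa>\<in>pos_orthant. \<forall>x'\<in>pos_orthant.
        inj_on (f_kappa N V \<kappa>) ((\<lambda>y. x' + y) ` S \<inter> pos_orthant))
     \<longleftrightarrow> (\<forall>\<kappa>\<in>pos_orthant. \<forall>x\<in>pos_orthant.
        inj_on (\<lambda>v. jacobian (f_kappa N V \<kappa>) (at x) *v v) S))
  \<and> ((\<forall>\<kappa>\<in>pos_orthant. \<forall>x\<in>pos_orthant.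
        inj_on (\<lambda>v. jacobian (f_kappa N V \<kappa>) (at x) *v v) S)
     \<longleftrightarrow> ((\<forall>I J I' J'. card I = s \<and> card J = s \<and> card I' = s \<and> card J' = s \<and>
            submat_det N I J * submat_det V J I \<noteq> 0 \<and>
            submat_det N I' J' * submat_det V J' I' \<noteq> 0 \<longrightarrow>
            sgn (submat_det N I J * submat_det V J I) =
            sgn (submat_det N I' J' * submat_det V J' I'))
        \<and> (\<exists>I J. card I = s \<and> card J = s \<and> submat_det N I J * submat_det V J I \<noteq> 0)))
  \<and> ((\<forall>\<kappa>\<in>pos_orthant. \<forall>x\<in>pos_orthant.
        inj_on (\<lambda>v. jacobian (f_kappa N V \<kappa>) (at x) *v v) S)
     \<longleftrightarrow> sign_vec ` {y. N *v y = 0} \<inter>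
           sign_vec ` ((\<lambda>z. V *v z) ` Sigma_set (S - {0})) = {})"
proof -
  note A = jac_core[of N V] and B = core_sig[of N V] and C = inj_sig[of N V] and D = core_min[of N V]
  show ?thesis unfolding S_def s_def A C using B D by blast
qed


end
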